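(* Let $\mathfrak{P}=(\rho_{t_0},\mathcal{E}_{t_1\leftarrow t_0},\dots,\mathcal{E}_{t_n\leftarrow t_{n-1}})$ be a multi-time quantum process over $n+1$ time steps, with fixed projective measurements $\{\Pi^{t_k}_{b_k}\}_{b_k}$ (and, for the doubled distribution, a second family $\{\Pi^{t_k}_{a_k}\}_{a_k}$) at each time $t_k$. Let $0=i_0<i_1<\dots<i_k\le n$ and let $\mathfrak{P}'=(\rho_{t_0},\mathcal{E}'_{t_{i_1}\leftarrow t_{i_0}},\dots,\mathcal{E}'_{t_{i_k}\leftarrow t_{i_{k-1}}})$ be the sub-process with the same initial state and with $$\mathcal{E}'_{t_{i_j}\leftarrow t_{i_{j-1}}}=\mathcal{E}_{t_{i_j}\leftarrow t_{i_j-1}}\circ\mathcal{E}_{t_{i_j-1}\leftarrow t_{i_j-2}}\circ\cdots\circ\mathcal{E}_{t_{i_{j-1}+1}\leftarrow t_{i_{j-1}}},$$ measured at times $t_{i_0},t_{i_1},\dots,t_{i_k}$ with the same projectors as in $\mathfrak{P}$. Then the temporal KD quasiprobability distribution (right, left, or doubled) of $\mathfrak{P}'$ equals the marginal of the corresponding temporal KD quasiprobability distribution of $\mathfrak{P}$ obtained by summing over all outcome variables at the time steps not in $\{t_{i_0},\dots,t_{i_k}\}$ (for the doubled distribution, summing over both the ket-side and bra-side outcomes at those times). Moreover, if two such sub-processes have retained time sets $S$ and $T$ with $S\cap T\neq\emptyset$, then the marginals of their temporal KD distributions onto the outcome variables at the times in $S\cap T$ coincide.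
   Context: All Hilbert spaces are finite-dimensional. A multi-time quantum process $\mathfrak{P}=(\rho_{t_0},\mathcal{E}_{t_1\leftarrow t_0},\dots,\mathcal{E}_{t_n\leftarrow t_{n-1}})$ consists of a density operator $\rho_{t_0}$ on $\mathcal{H}_{t_0}$ and completely positive trace-preserving (CPTP) maps $\mathcal{E}_{t_j\leftarrow t_{j-1}}:\mathbf{B}(\mathcal{H}_{t_{j-1}})\to\mathbf{B}(\mathcal{H}_{t_j})$, extended linearly to all (not necessarily Hermitian) operators. At each time $t_k$ a complete family of orthogonal projectors is fixed ($\sum_{b}\Pi^{t_k}_b=\mathbb{I}$, $\Pi^{t_k}_b\Pi^{t_k}_{b'}=\delta_{bb'}\Pi^{t_k}_b$). The right temporal Kirkwood–Dirac (KD) quasiprobability distribution is $$\overrightarrow{Q}_{\rm KD}(b_n,\dots,b_0)=\operatorname{Tr}\Big[\mathcal{E}_{t_n\leftarrow t_{n-1}}\Big(\cdots\mathcal{E}_{t_2\leftarrow t_1}\big(\mathcal{E}_{t_1\leftarrow t_0}(\rho_{t_0}\Pi^{t_0}_{b_0})\Pi^{t_1}_{b_1}\big)\Pi^{t_2}_{b_2}\cdots\Big)\Pi^{t_n}_{b_n}\Big],$$ the left one is $$\overleftarrow{Q}_{\rm KD}(a_n,\dots,a_0)=\operatorname{Tr}\Big[\Pi^{t_n}_{a_n}\mathcal{E}_{t_n\leftarrow t_{n-1}}\Big(\cdots\Pi^{t_1}_{a_1}\mathcal{E}_{t_1\leftarrow t_0}(\Pi^{t_0}_{a_0}\rho_{t_0})\cdots\Big)\Big],$$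 and the doubled one (ket-side projectors $\Pi^{t_k}_{a_k}$, bra-side projectors $\Pi^{t_k}_{b_k}$) is $$\overleftrightarrow{Q}_{\rm KD}(a_n,\dots,a_0;b_n,\dots,b_0)=\operatorname{Tr}\Big[\Pi^{t_n}_{a_n}\mathcal{E}_{t_n\leftarrow t_{n-1}}\Big(\cdots\Pi^{t_1}_{a_1}\mathcal{E}_{t_1\leftarrow t_0}\big(\Pi^{t_0}_{a_0}\rho_{t_0}\Pi^{t_0}_{b_0}\big)\Pi^{t_1}_{b_1}\cdots\Big)\Pi^{t_n}_{b_n}\Big].$$ *)

theory Defs
  imports "Jordan_Normal_Form.Matrix" "HOL-Library.FuncSet"
begin

definition mtrace :: "complex mat \<Rightarrow> complex" where
  "mtrace A = (\<Sum>i<dim_row A. A $$ (i,i))"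

definition dagger :: "complex mat \<Rightarrow> complex mat" where
  "dagger A = mat (dim_col A) (dim_row A) (\<lambda>(i,j). cnj (A $$ (j,i)))"

definition psd :: "nat \<Rightarrow> complex mat \<Rightarrow> bool" where
  "psd d A \<longleftrightarrow> A \<in> carrier_mat d d \<and> dagger A = A \<and>
     (\<forall>v \<in> carrier_vec d. Im ((A *\<^sub>v v) \<bullet>c v) = 0 \<and> Re ((A *\<^sub>v v) \<bullet>c v) \<ge> 0)"

definition density_op :: "nat \<Rightarrow> complex mat \<Rightarrow> bool" where
  "density_op d \<rho> \<longleftrightarrow> psd d \<rho> \<and> mtrace \<rho> = 1"

(* linear map B(C^din) -> B(C^dout), defined on all (not nec. Hermitian) operators *)
definition lin_map :: "nat \<Rightarrow> nat \<Rightarrow> (complex mat \<Rightarrow> complex mat) \<Rightarrow> bool" where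
  "lin_map din dout E \<longleftrightarrow>
     (\<forall>X \<in> carrier_mat din din. E X \<in> carrier_mat dout dout) \<and>
     (\<forall>X \<in> carrier_mat din din. \<forall>Y \<in> carrier_mat din din. E (X + Y) = E X + E Y) \<and>
     (\<forall>c. \<forall>X \<in> carrier_mat din din. E (c \<cdot>\<^sub>m X) = c \<cdot>\<^sub>m E X)"

definition sub_block :: "nat \<Rightarrow> complex mat \<Rightarrow> nat \<Rightarrow> nat \<Rightarrow> complex mat" where
  "sub_block din X p q = mat din din (\<lambda>(i,j). X $$ (p * din + i, q * din + j))"

(* (id_m \<otimes> E) applied to an operator on C^m \<otimes> C^din *)
definition ampl :: "nat \<Rightarrow> nat \<Rightarrow> nat \<Rightarrow> (complex mat \<Rightarrow> complex mat) \<Rightarrow> complex mat \<Rightarrow> complex mat" where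
  "ampl m din dout E X = mat (m * dout) (m * dout)
     (\<lambda>(r,c). E (sub_block din X (r div dout) (c div dout)) $$ (r mod dout, c mod dout))"

definition comp_pos :: "nat \<Rightarrow> nat \<Rightarrow> (complex mat \<Rightarrow> complex mat) \<Rightarrow> bool" where
  "comp_pos din dout E \<longleftrightarrow> (\<forall>m X. psd (m * din) X \<longrightarrow> psd (m * dout) (ampl m din dout E X))"

definition trace_pres :: "nat \<Rightarrow> (complex mat \<Rightarrow> complex mat) \<Rightarrow> bool" where
  "trace_pres din E \<longleftrightarrow> (\<forall>X \<in> carrier_mat din din. mtrace (E X) = mtrace X)"

definition cptp :: "nat \<Rightarrow> nat \<Rightarrow> (complex mat \<Rightarrow> complex mat) \<Rightarrow> bool" where
  "cptp din dout E \<longleftrightarrow> lin_map din dout E \<and> comp_pos din dout E \<and> trace_pres din E"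

definition quantum_process :: "nat \<Rightarrow> (nat \<Rightarrow> nat) \<Rightarrow> complex mat \<Rightarrow> (nat \<Rightarrow> complex mat \<Rightarrow> complex mat) \<Rightarrow> bool" where
  "quantum_process n d \<rho> E \<longleftrightarrow> density_op (d 0) \<rho> \<and> (\<forall>j \<in> {1..n}. cptp (d (j - 1)) (d j) (E j))"

definition msum :: "nat \<Rightarrow> ('b \<Rightarrow> complex mat) \<Rightarrow> 'b set \<Rightarrow> complex mat" where
  "msum d f S = mat d d (\<lambda>ij. \<Sum>b\<in>S. f b $$ ij)"

definition proj_family :: "nat \<Rightarrow> 'b set \<Rightarrow> ('b \<Rightarrow> complex mat) \<Rightarrow> bool" where
  "proj_family d S P \<longleftrightarrow> finite S \<and>
     (\<forall>b \<in> S. P b \<in> carrier_mat d d \<and> dagger (P b) = P b) \<and>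
     (\<forall>b \<in> S. \<forall>b' \<in> S. P b * P b' = (if b = b' then P b else 0\<^sub>m d d)) \<and>
     msum d P S = 1\<^sub>m d"

definition measurements :: "nat \<Rightarrow> (nat \<Rightarrow> nat) \<Rightarrow> (nat \<Rightarrow> 'b set) \<Rightarrow> (nat \<Rightarrow> 'b \<Rightarrow> complex mat) \<Rightarrow> bool" where
  "measurements n d S P \<longleftrightarrow> (\<forall>k \<le> n. proj_family (d k) (S k) (P k))"

fun rstate :: "complex mat \<Rightarrow> (nat \<Rightarrow> complex mat \<Rightarrow> complex mat) \<Rightarrow> (nat \<Rightarrow> 'b \<Rightarrow> complex mat) \<Rightarrow> (nat \<Rightarrow> 'b) \<Rightarrow> nat \<Rightarrow> complex mat" where
  "rstate \<rho> E P b 0 = \<rho> * P 0 (b 0)"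
| "rstate \<rho> E P b (Suc k) = E (Suc k) (rstate \<rho> E P b k) * P (Suc k) (b (Suc k))"

fun lstate :: "complex mat \<Rightarrow> (nat \<Rightarrow> complex mat \<Rightarrow> complex mat) \<Rightarrow> (nat \<Rightarrow> 'b \<Rightarrow> complex mat) \<Rightarrow> (nat \<Rightarrow> 'b) \<Rightarrow> nat \<Rightarrow> complex mat" where
  "lstate \<rho> E P a 0 = P 0 (a 0) * \<rho>"
| "lstate \<rho> E P a (Suc k) = P (Suc k) (a (Suc k)) * E (Suc k) (lstate \<rho> E P a k)"

fun dstate :: "complex mat \<Rightarrow> (nat \<Rightarrow> complex mat \<Rightarrow> complex mat) \<Rightarrow> (nat \<Rightarrow> 'b \<Rightarrow> complex mat) \<Rightarrow> (nat \<Rightarrow> 'b \<Rightarrow> complex mat) \<Rightarrow> (nat \<Rightarrow> 'b) \<Rightarrow> (nat \<Rightarrow> 'b) \<Rightarrow> nat \<Rightarrow> complex mat" where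
  "dstate \<rho> E PA PB a b 0 = PA 0 (a 0) * \<rho> * PB 0 (b 0)"
| "dstate \<rho> E PA PB a b (Suc k) = PA (Suc k) (a (Suc k)) * E (Suc k) (dstate \<rho> E PA PB a b k) * PB (Suc k) (b (Suc k))"

definition right_KD where "right_KD n \<rho> E P b = mtrace (rstate \<rho> E P b n)"
definition left_KD where "left_KD n \<rho> E P a = mtrace (lstate \<rho> E P a n)"
definition doubled_KD where "doubled_KD n \<rho> E PA PB a b = mtrace (dstate \<rho> E PA PB a b n)"

fun chain :: "(nat \<Rightarrow> complex mat \<Rightarrow> complex mat) \<Rightarrow> nat \<Rightarrow> nat \<Rightarrow> complex mat \<Rightarrow> complex mat" where
  "chain E a 0 = id"
| "chain E a (Suc m) = E (a + Suc m) \<circ> chain E a m"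

definition sub_channels :: "(nat \<Rightarrow> complex mat \<Rightarrow> complex mat) \<Rightarrow> (nat \<Rightarrow> nat) \<Rightarrow> nat \<Rightarrow> complex mat \<Rightarrow> complex mat" where
  "sub_channels E i j = chain E (i (j - 1)) (i j - i (j - 1))"

definition sub_times :: "nat \<Rightarrow> nat \<Rightarrow> (nat \<Rightarrow> nat) \<Rightarrow> bool" where
  "sub_times n k i \<longleftrightarrow> i 0 = 0 \<and> (\<forall>j < k. i j < i (Suc j)) \<and> i k \<le> n"

end

theory Submission
  imports Defs
begin


lemma msum_carrier[simp]: "msum d f S \<in> carrier_mat d d"
  by (simp add: msum_def)

lemma msum_index[simp]: "r < d \<Longrightarrow> s < d \<Longrightarrow> msum d f S $$ (r,s) = (\<Sum>b\<in>S. f b $$ (r,s))"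
  by (simp add: msum_def)

lemma msum_dims[simp]: "dim_row (msum d f S) = d" "dim_col (msum d f S) = d"
  by (simp_all add: msum_def)

lemma msum_cong: "(\<And>s. s \<in> S \<Longrightarrow> f s = g s) \<Longrightarrow> S = T \<Longrightarrow> msum d f S = msum d g T"
  unfolding msum_def by (intro cong_mat) auto

lemma msum_reindex: "inj_on g S \<Longrightarrow> msum d f (g ` S) = msum d (\<lambda>x. f (g x)) S"
  unfolding msum_def by (intro eq_matI) (auto simp: sum.reindex)

lemma msum_empty: "msum d f {} = 0\<^sub>m d d"
  by (intro eq_matI) auto

lemma msum_insert: "finite S \<Longrightarrow> x \<notin> S \<Longrightarrow> f x \<in> carrier_mat d d \<Longrightarrow>
   msum d f (insert x S) = f x + msum d f S"
  by (intro eq_matI) auto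

lemma msum_single: "f x \<in> carrier_mat d d \<Longrightarrow> msum d f {x} = f x"
  by (intro eq_matI) auto

lemma msum_Times: "finite A \<Longrightarrow> finite B \<Longrightarrow>
   msum d f (A \<times> B) = msum d (\<lambda>a. msum d (\<lambda>b. f (a,b)) B) A"
  by (intro eq_matI) (auto simp: sum.cartesian_product)

lemma mtrace_msum: "(\<And>s. s \<in> S \<Longrightarrow> f s \<in> carrier_mat d d) \<Longrightarrow> mtrace (msum d f S) = (\<Sum>s\<in>S. mtrace (f s))"
  unfolding mtrace_def by (simp add: sum.swap[of _ S], intro sum.cong) auto

lemma lin_zero: assumes "lin_map din dout G" shows "G (0\<^sub>m din din) = 0\<^sub>m dout dout"
proof -
  have c: "G (0\<^sub>m din din) \<in> carrier_mat dout dout" using assms unfolding lin_map_def by auto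
  have e: "0 \<cdot>\<^sub>m 0\<^sub>m din din = (0\<^sub>m din din :: complex mat)" by (intro eq_matI) auto
  have "G (0\<^sub>m din din) = G (0 \<cdot>\<^sub>m 0\<^sub>m din din)" by (simp only: e)
  also have "\<dots> = 0 \<cdot>\<^sub>m G (0\<^sub>m din din)" using assms zero_carrier_mat unfolding lin_map_def by blast
  also have "\<dots> = 0\<^sub>m dout dout" using c by (intro eq_matI) auto
  finally show ?thesis .
qed

lemma lin_msum:
  assumes G: "lin_map din dout G" and fin: "finite S" and f: "\<And>s. s \<in> S \<Longrightarrow> f s \<in> carrier_mat din din"
  shows "G (msum din f S) = msum dout (\<lambda>s. G (f s)) S"
  using fin f
proof (induction S rule: finite_induct)
  case empty
  then show ?case using lin_zero[OF G] by (simp add: msum_empty)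
next
  case (insert x F)
  have cx: "G (f x) \<in> carrier_mat dout dout" using G insert unfolding lin_map_def by auto
  have "G (msum din f (insert x F)) = G (f x + msum din f F)"
    using insert by (simp add: msum_insert)
  also have "\<dots> = G (f x) + G (msum din f F)" using G insert unfolding lin_map_def by auto
  also have "\<dots> = msum dout (\<lambda>s. G (f s)) (insert x F)"
    using insert cx by (simp add: msum_insert)
  finally show ?case .
qed

lemma lin_right: "P \<in> carrier_mat d d \<Longrightarrow> lin_map d d (\<lambda>X. X * P)"
  unfolding lin_map_def by (auto simp: add_mult_distrib_mat)

lemma lin_left: "P \<in> carrier_mat d d \<Longrightarrow> lin_map d d (\<lambda>X. P * X)"
  unfolding lin_map_def by (auto simp: mult_add_distrib_mat mult_smult_distrib)

lemma lin_both: "(P::complex mat) \<in> carrier_mat d d \<Longrightarrow> Q \<in> carrier_mat d d \<Longrightarrow> lin_map d d (\<lambda>X. P * X * Q)"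
  unfolding lin_map_def
proof (intro conjI ballI allI)
  fix X Y :: "complex mat" assume a: "P \<in> carrier_mat d d" "Q \<in> carrier_mat d d" "X \<in> carrier_mat d d" "Y \<in> carrier_mat d d"
  show "P * (X + Y) * Q = P * X * Q + P * Y * Q"
    using a by (simp add: mult_add_distrib_mat add_mult_distrib_mat[of _ d d])
next
  fix c and X :: "complex mat" assume a: "P \<in> carrier_mat d d" "Q \<in> carrier_mat d d" "X \<in> carrier_mat d d"
  show "P * (c \<cdot>\<^sub>m X) * Q = c \<cdot>\<^sub>m (P * X * Q)"
    using a by (simp add: mult_smult_distrib mult_smult_assoc_mat[of _ d d])
qed (auto)




fun gst :: "complex mat \<Rightarrow> (nat \<Rightarrow> complex mat \<Rightarrow> complex mat) \<Rightarrow> (nat \<Rightarrow> 'o \<Rightarrow> complex mat \<Rightarrow> complex mat) \<Rightarrow> (nat \<Rightarrow> 'o) \<Rightarrow> nat \<Rightarrow> complex mat" where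
  "gst \<rho> E F w 0 = F 0 (w 0) \<rho>"
| "gst \<rho> E F w (Suc m) = F (Suc m) (w (Suc m)) (E (Suc m) (gst \<rho> E F w m))"

lemma gst_cong: "(\<And>t. t \<le> m \<Longrightarrow> w t = w' t) \<Longrightarrow> gst \<rho> E F w m = gst \<rho> E F w' m"
  by (induction m) auto

context
  fixes n k :: nat and d i :: "nat \<Rightarrow> nat" and \<rho> :: "complex mat"
    and E :: "nat \<Rightarrow> complex mat \<Rightarrow> complex mat"
    and F :: "nat \<Rightarrow> 'o \<Rightarrow> complex mat \<Rightarrow> complex mat" and Oc :: "nat \<Rightarrow> 'o set"
  assumes rho: "\<rho> \<in> carrier_mat (d 0) (d 0)"
    and Elin: "\<And>t. 1 \<le> t \<Longrightarrow> t \<le> n \<Longrightarrow> lin_map (d (t-1)) (d t) (E t)"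
    and Etr: "\<And>t. 1 \<le> t \<Longrightarrow> t \<le> n \<Longrightarrow> trace_pres (d (t-1)) (E t)"
    and Flin: "\<And>t x. t \<le> n \<Longrightarrow> x \<in> Oc t \<Longrightarrow> lin_map (d t) (d t) (F t x)"
    and Fsum: "\<And>t X. t \<le> n \<Longrightarrow> X \<in> carrier_mat (d t) (d t) \<Longrightarrow> msum (d t) (\<lambda>x. F t x X) (Oc t) = X"
    and Ofin: "\<And>t. t \<le> n \<Longrightarrow> finite (Oc t)"
    and sub: "sub_times n k i"
begin

lemma ElinS: "m < n \<Longrightarrow> lin_map (d m) (d (Suc m)) (E (Suc m))"
  using Elin[of "Suc m"] by simp

lemma EcarS: "m < n \<Longrightarrow> X \<in> carrier_mat (d m) (d m) \<Longrightarrow> E (Suc m) X \<in> carrier_mat (d (Suc m)) (d (Suc m))"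
  using ElinS unfolding lin_map_def by blast

lemma EtrS: "m < n \<Longrightarrow> X \<in> carrier_mat (d m) (d m) \<Longrightarrow> mtrace (E (Suc m) X) = mtrace X"
  using Etr[of "Suc m"] unfolding trace_pres_def by simp

lemma Fcar: "t \<le> n \<Longrightarrow> x \<in> Oc t \<Longrightarrow> X \<in> carrier_mat (d t) (d t) \<Longrightarrow> F t x X \<in> carrier_mat (d t) (d t)"
  using Flin unfolding lin_map_def by blast

lemma gst_carrier: "m \<le> n \<Longrightarrow> (\<And>t. t \<le> m \<Longrightarrow> w t \<in> Oc t) \<Longrightarrow> gst \<rho> E F w m \<in> carrier_mat (d m) (d m)"
proof (induction m)
  case 0
  then show ?case using Fcar rho by simp
next
  case (Suc m)
  then show ?case using Fcar EcarS by simp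
qed

lemma i0: "i 0 = 0" using sub unfolding sub_times_def by simp

lemma i_mono: "j < j' \<Longrightarrow> j' \<le> k \<Longrightarrow> i j < i j'"
proof (induction j')
  case 0 then show ?case by simp
next
  case (Suc j')
  have "i j' < i (Suc j')" using sub Suc.prems unfolding sub_times_def by auto
  then show ?case using Suc by (cases "j = j'") auto
qed

lemma i_le_n: "j \<le> k \<Longrightarrow> i j \<le> n"
  using sub i_mono[of j k] unfolding sub_times_def by (cases "j = k") auto

lemma i_eq_iff: "j \<le> k \<Longrightarrow> j' \<le> k \<Longrightarrow> i j = i j' \<longleftrightarrow> j = j'"
  using i_mono by (metis linorder_neqE_nat less_irrefl)

definition Wset :: "nat \<Rightarrow> (nat \<Rightarrow> 'o) \<Rightarrow> (nat \<Rightarrow> 'o) set" where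
  "Wset m c = {w \<in> PiE {..m} Oc. \<forall>j\<le>k. i j \<le> m \<longrightarrow> w (i j) = c j}"

definition M :: "nat \<Rightarrow> (nat \<Rightarrow> 'o) \<Rightarrow> complex mat" where
  "M m c = msum (d m) (\<lambda>w. gst \<rho> E F w m) (Wset m c)"

lemma Wset_fin: "m \<le> n \<Longrightarrow> finite (Wset m c)"
  unfolding Wset_def by (rule finite_subset[of _ "PiE {..m} Oc"]) (auto intro!: finite_PiE Ofin)

lemma M_carrier: "M m c \<in> carrier_mat (d m) (d m)"
  unfolding M_def by simp

lemma M_0: assumes c0: "c 0 \<in> Oc 0" shows "M 0 c = F 0 (c 0) \<rho>"
proof -
  have "Wset 0 c = {(\<lambda>t\<in>{..0::nat}. c 0)}"
  proof (intro equalityI subsetI)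
    fix w assume w: "w \<in> Wset 0 c"
    have "\<forall>j\<le>k. i j \<le> 0 \<longrightarrow> w (i j) = c j" using w unfolding Wset_def by blast
    then have "w (i 0) = c 0" using i0 by simp
    then have "w 0 = c 0" using i0 by simp
    have wP: "w \<in> PiE {..0} Oc" using w unfolding Wset_def by blast
    have "w = (\<lambda>t\<in>{..0::nat}. c 0)"
    proof (rule ext)
      fix t show "w t = (\<lambda>t\<in>{..0::nat}. c 0) t"
      proof (cases "t = 0")
        case True then show ?thesis using \<open>w 0 = c 0\<close> by simp
      next
        case False then have "t \<notin> {..0}" by simp
        then show ?thesis using PiE_arb[OF wP] by simp
      qed
    qed
    then show "w \<in> {(\<lambda>t\<in>{..0::nat}. c 0)}" by (simp only: singleton_iff)
  next
    fix w assume "w \<in> {(\<lambda>t\<in>{..0::nat}. c 0)}"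
    then have w: "w = (\<lambda>t\<in>{..0::nat}. c 0)" by (simp only: singleton_iff)
    have "w \<in> PiE {..0} Oc" unfolding w using c0 by (intro PiE_I) auto
    moreover have "\<forall>j\<le>k. i j \<le> 0 \<longrightarrow> w (i j) = c j"
    proof (intro allI impI)
      fix j assume j: "j \<le> k" "i j \<le> 0"
      have "j = 0" using i_mono[of 0 j] j i0 by (cases "j = 0") auto
      then show "w (i j) = c j" using i0 w by simp
    qed
    ultimately show "w \<in> Wset 0 c" unfolding Wset_def by blast
  qed
  then show ?thesis unfolding M_def using Fcar rho c0 by (simp add: msum_single)
qed

lemma Wset_Suc: assumes m: "m < n"
  shows "Wset (Suc m) c = (\<lambda>(y, g). g(Suc m := y)) ` ({y \<in> Oc (Suc m). \<forall>j\<le>k. i j = Suc m \<longrightarrow> y = c j} \<times> Wset m c)"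
proof (intro equalityI subsetI)
  fix w assume w: "w \<in> Wset (Suc m) c"
  have w1: "w \<in> PiE {..Suc m} Oc" and w2: "\<forall>j\<le>k. i j \<le> Suc m \<longrightarrow> w (i j) = c j"
    using w unfolding Wset_def by auto
  define g where "g = w(Suc m := undefined)"
  have e: "w = (\<lambda>(y, g). g(Suc m := y)) (w (Suc m), g)" unfolding g_def by simp
  have y: "w (Suc m) \<in> {y \<in> Oc (Suc m). \<forall>j\<le>k. i j = Suc m \<longrightarrow> y = c j}"
    using w1 w2 by auto
  have "g \<in> PiE {..m} Oc"
  proof (rule PiE_I)
    fix t assume "t \<in> {..m}"
    then show "g t \<in> Oc t" using w1 unfolding g_def by auto
  next
    fix t assume "t \<notin> {..m}"
    then show "g t = undefined" using PiE_arb[OF w1, of t] unfolding g_def by (cases "t = Suc m") auto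
  qed
  moreover have "\<forall>j\<le>k. i j \<le> m \<longrightarrow> g (i j) = c j"
    using w2 unfolding g_def by auto
  ultimately have "g \<in> Wset m c" unfolding Wset_def by blast
  with e y show "w \<in> (\<lambda>(y, g). g(Suc m := y)) ` ({y \<in> Oc (Suc m). \<forall>j\<le>k. i j = Suc m \<longrightarrow> y = c j} \<times> Wset m c)"
    by (metis (no_types, lifting) SigmaI image_eqI)
next
  fix w assume "w \<in> (\<lambda>(y, g). g(Suc m := y)) ` ({y \<in> Oc (Suc m). \<forall>j\<le>k. i j = Suc m \<longrightarrow> y = c j} \<times> Wset m c)"
  then obtain y g where w: "w = g(Suc m := y)" and y: "y \<in> Oc (Suc m)" "\<forall>j\<le>k. i j = Suc m \<longrightarrow> y = c j"
    and g: "g \<in> Wset m c" by auto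
  have g1: "g \<in> PiE {..m} Oc" and g2: "\<forall>j\<le>k. i j \<le> m \<longrightarrow> g (i j) = c j"
    using g unfolding Wset_def by auto
  have "w \<in> PiE {..Suc m} Oc"
  proof (rule PiE_I)
    fix t assume "t \<in> {..Suc m}"
    then show "w t \<in> Oc t" using g1 y unfolding w by (cases "t = Suc m") auto
  next
    fix t assume "t \<notin> {..Suc m}"
    then show "w t = undefined" using PiE_arb[OF g1, of t] unfolding w by auto
  qed
  moreover have "\<forall>j\<le>k. i j \<le> Suc m \<longrightarrow> w (i j) = c j"
  proof (intro allI impI)
    fix j assume "j \<le> k" "i j \<le> Suc m"
    then show "w (i j) = c j" using g2 y unfolding w by (cases "i j = Suc m") auto
  qed
  ultimately show "w \<in> Wset (Suc m) c" unfolding Wset_def by blast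
qed

lemma M_Suc: assumes m: "m < n"
  shows "M (Suc m) c = msum (d (Suc m)) (\<lambda>y. F (Suc m) y (E (Suc m) (M m c))) {y \<in> Oc (Suc m). \<forall>j\<le>k. i j = Suc m \<longrightarrow> y = c j}"
proof -
  let ?Y = "{y \<in> Oc (Suc m). \<forall>j\<le>k. i j = Suc m \<longrightarrow> y = c j}"
  have finY: "finite ?Y" using Ofin m by auto
  have finW: "finite (Wset m c)" using Wset_fin m by simp
  have inj: "inj_on (\<lambda>(y, g). g(Suc m := y)) (?Y \<times> Wset m c)"
    by (rule inj_on_subset[OF inj_combinator[of "Suc m" "{..m}" Oc]]) (auto simp: Wset_def)
  have gW: "\<And>g t. g \<in> Wset m c \<Longrightarrow> t \<le> m \<Longrightarrow> g t \<in> Oc t" by (auto simp: Wset_def PiE_iff)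
  have gc: "\<And>g. g \<in> Wset m c \<Longrightarrow> gst \<rho> E F g m \<in> carrier_mat (d m) (d m)"
    using gst_carrier gW m by simp
  have "M (Suc m) c = msum (d (Suc m)) (\<lambda>p. gst \<rho> E F ((\<lambda>(y, g). g(Suc m := y)) p) (Suc m)) (?Y \<times> Wset m c)"
    unfolding M_def Wset_Suc[OF m] by (rule msum_reindex[OF inj])
  also have "\<dots> = msum (d (Suc m)) (\<lambda>y. msum (d (Suc m)) (\<lambda>g. F (Suc m) y (E (Suc m) (gst \<rho> E F g m))) (Wset m c)) ?Y"
  proof -
    have "\<And>y g. gst \<rho> E F (g(Suc m := y)) m = gst \<rho> E F g m" by (rule gst_cong) auto
    then show ?thesis
      apply (subst msum_Times[OF finY finW])
      apply (rule msum_cong[OF _ refl])+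
      by simp
  qed
  also have "\<dots> = msum (d (Suc m)) (\<lambda>y. F (Suc m) y (msum (d (Suc m)) (\<lambda>g. E (Suc m) (gst \<rho> E F g m)) (Wset m c))) ?Y"
    apply (rule msum_cong[OF _ refl])
    apply (rule lin_msum[OF Flin finW, symmetric])
    using m EcarS gc by auto
  also have "\<dots> = msum (d (Suc m)) (\<lambda>y. F (Suc m) y (E (Suc m) (M m c))) ?Y"
    unfolding M_def
    by (subst lin_msum[OF ElinS[OF m] finW]) (use gc in auto)
  finally show ?thesis .
qed

lemma M_Suc_keep: assumes m: "m < n" and jk: "j0 \<le> k" and ij: "i j0 = Suc m" and cj: "c j0 \<in> Oc (i j0)"
  shows "M (Suc m) c = F (Suc m) (c j0) (E (Suc m) (M m c))"
proof -
  have uq: "j' = j0" if "j' \<le> k" "i j' = Suc m" for j' using i_eq_iff[of j' j0] that jk ij by simp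
  have "{y \<in> Oc (Suc m). \<forall>j\<le>k. i j = Suc m \<longrightarrow> y = c j} = {c j0}"
  proof (intro equalityI subsetI)
    fix y assume "y \<in> {y \<in> Oc (Suc m). \<forall>j\<le>k. i j = Suc m \<longrightarrow> y = c j}"
    then have "y = c j0" using jk ij by blast
    then show "y \<in> {c j0}" by simp
  next
    fix y assume "y \<in> {c j0}"
    then have y: "y = c j0" by simp
    have "\<forall>j\<le>k. i j = Suc m \<longrightarrow> y = c j" using uq y by blast
    moreover have "y \<in> Oc (Suc m)" using y cj ij by simp
    ultimately show "y \<in> {y \<in> Oc (Suc m). \<forall>j\<le>k. i j = Suc m \<longrightarrow> y = c j}" by blast
  qed
  moreover have "F (Suc m) (c j0) (E (Suc m) (M m c)) \<in> carrier_mat (d (Suc m)) (d (Suc m))"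
    using Fcar[of "Suc m" "c j0"] m EcarS[OF m M_carrier] cj ij by simp
  ultimately show ?thesis unfolding M_Suc[OF m] by (simp add: msum_single)
qed

lemma M_Suc_skip: assumes m: "m < n" and nj: "\<forall>j\<le>k. i j \<noteq> Suc m"
  shows "M (Suc m) c = E (Suc m) (M m c)"
proof -
  have "{y \<in> Oc (Suc m). \<forall>j\<le>k. i j = Suc m \<longrightarrow> y = c j} = Oc (Suc m)"
    using nj by blast
  then show ?thesis unfolding M_Suc[OF m] using Fsum[of "Suc m"] m EcarS[OF m M_carrier] by simp
qed

lemma i_le_mono: "j' \<le> j \<Longrightarrow> j \<le> k \<Longrightarrow> i j' \<le> i j"
  using i_mono[of j' j] by (cases "j' = j") auto

lemma M_chain: assumes j: "j < k" shows "l < i (Suc j) - i j \<Longrightarrow> M (i j + l) c = chain E (i j) l (M (i j) c)"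
proof (induction l)
  case 0 then show ?case by simp
next
  case (Suc l)
  have lt: "i j + Suc l < i (Suc j)" using Suc.prems by simp
  have iSn: "i (Suc j) \<le> n" using i_le_n j by simp
  have m: "i j + l < n" using lt iSn by simp
  have nj: "\<forall>j'\<le>k. i j' \<noteq> Suc (i j + l)"
  proof (intro allI impI)
    fix j' assume j': "j' \<le> k"
    show "i j' \<noteq> Suc (i j + l)"
    proof (cases "j' \<le> j")
      case True then show ?thesis using i_le_mono[of j' j] j by simp
    next
      case False then have "Suc j \<le> j'" by simp
      then show ?thesis using i_le_mono[of "Suc j" j'] j' lt by simp
    qed
  qed
  have "M (i j + Suc l) c = M (Suc (i j + l)) c" by simp
  also have "\<dots> = E (Suc (i j + l)) (M (i j + l) c)" by (rule M_Suc_skip[OF m nj])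
  also have "\<dots> = chain E (i j) (Suc l) (M (i j) c)" using Suc by simp
  finally show ?case .
qed

lemma sub_state: assumes cK: "\<forall>j\<le>k. c j \<in> Oc (i j)"
  shows "j \<le> k \<Longrightarrow> gst \<rho> (sub_channels E i) (\<lambda>j. F (i j)) c j = M (i j) c"
proof (induction j)
  case 0
  have "c 0 \<in> Oc 0" using cK i0 by (metis le0)
  then show ?case using M_0[of c] i0 by simp
next
  case (Suc j)
  have j: "j < k" using Suc.prems by simp
  have lt: "i j < i (Suc j)" using i_mono j by simp
  obtain l where l: "i (Suc j) - i j = Suc l" using lt by (cases "i (Suc j) - i j") auto
  have iS: "i (Suc j) = Suc (i j + l)" using l lt by simp
  have m: "i j + l < n" using iS i_le_n[of "Suc j"] j by simp
  have "gst \<rho> (sub_channels E i) (\<lambda>j. F (i j)) c (Suc j)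
      = F (i (Suc j)) (c (Suc j)) (chain E (i j) (Suc l) (M (i j) c))"
  proof -
    have sc: "sub_channels E i (Suc j) = chain E (i j) (Suc l)" using l by (simp add: sub_channels_def)
    have ih: "gst \<rho> (sub_channels E i) (\<lambda>j. F (i j)) c j = M (i j) c" using Suc by simp
    show ?thesis by (simp only: gst.simps sc ih)
  qed
  also have "\<dots> = F (Suc (i j + l)) (c (Suc j)) (E (Suc (i j + l)) (M (i j + l) c))"
    using M_chain[OF j, of l c] l iS by simp
  also have "\<dots> = M (i (Suc j)) c"
  proof -
    have "c (Suc j) \<in> Oc (i (Suc j))" using cK Suc.prems by blast
    then show ?thesis using M_Suc_keep[OF m, of "Suc j" c] Suc.prems iS by simp
  qed
  finally show ?case .
qed

lemma M_trail: "i k \<le> m \<Longrightarrow> m \<le> n \<Longrightarrow> mtrace (M m c) = mtrace (M (i k) c)"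
proof (induction m)
  case 0 then show ?case by simp
next
  case (Suc m)
  show ?case
  proof (cases "i k = Suc m")
    case True then show ?thesis by simp
  next
    case False
    then have ik: "i k \<le> m" using Suc.prems by simp
    have nj: "\<forall>j'\<le>k. i j' \<noteq> Suc m" using i_le_mono ik by (metis le_refl not_less_eq_eq)
    have m: "m < n" using Suc.prems by simp
    have "mtrace (M (Suc m) c) = mtrace (E (Suc m) (M m c))" using M_Suc_skip[OF m nj] by simp
    also have "\<dots> = mtrace (M m c)" using EtrS[OF m M_carrier] .
    finally show ?thesis using Suc.IH ik m by simp
  qed
qed

theorem marg: assumes cK: "\<forall>j\<le>k. c j \<in> Oc (i j)"
  shows "mtrace (gst \<rho> (sub_channels E i) (\<lambda>j. F (i j)) c k) =
    (\<Sum>w \<in> {w \<in> PiE {..n} Oc. \<forall>j\<le>k. w (i j) = c j}. mtrace (gst \<rho> E F w n))"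
proof -
  have "mtrace (gst \<rho> (sub_channels E i) (\<lambda>j. F (i j)) c k) = mtrace (M (i k) c)"
    using sub_state[OF cK, of k] by simp
  also have "\<dots> = mtrace (M n c)" using M_trail[of n c] i_le_n[of k] by simp
  also have "\<dots> = (\<Sum>w \<in> Wset n c. mtrace (gst \<rho> E F w n))"
    unfolding M_def
    by (rule mtrace_msum) (auto intro!: gst_carrier simp: Wset_def PiE_iff)
  also have "Wset n c = {w \<in> PiE {..n} Oc. \<forall>j\<le>k. w (i j) = c j}"
    unfolding Wset_def using i_le_n by auto
  finally show ?thesis .
qed

end



lemma regroup:
  fixes f G :: "(nat \<Rightarrow> 'o) \<Rightarrow> complex" and Oc :: "nat \<Rightarrow> 'o set" and i :: "nat \<Rightarrow> nat"
  assumes Ofin: "\<And>t. t \<le> n \<Longrightarrow> finite (Oc t)" and ik: "\<And>j. j \<le> k \<Longrightarrow> i j \<le> n" and C: "C \<subseteq> i ` {..k}"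
  and G: "\<And>c. c \<in> PiE {..k} (\<lambda>j. Oc (i j)) \<Longrightarrow> G c = (\<Sum>w\<in>{w \<in> PiE {..n} Oc. \<forall>j\<le>k. w (i j) = c j}. f w)"
  shows "(\<Sum>c\<in>{c \<in> PiE {..k} (\<lambda>j. Oc (i j)). \<forall>j\<le>k. i j \<in> C \<longrightarrow> c j = h (i j)}. G c)
       = (\<Sum>w\<in>{w \<in> PiE {..n} Oc. \<forall>t\<in>C. w t = h t}. f w)"
proof -
  define S where "S = {w \<in> PiE {..n} Oc. \<forall>t\<in>C. w t = h t}"
  define T where "T = {c \<in> PiE {..k} (\<lambda>j. Oc (i j)). \<forall>j\<le>k. i j \<in> C \<longrightarrow> c j = h (i j)}"
  define g where "g w = (\<lambda>j\<in>{..k}. w (i j))" for w :: "nat \<Rightarrow> 'o"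
  have finS: "finite S" unfolding S_def
    by (rule finite_subset[of _ "PiE {..n} Oc"]) (auto intro!: finite_PiE Ofin)
  have finT: "finite T" unfolding T_def
    by (rule finite_subset[of _ "PiE {..k} (\<lambda>j. Oc (i j))"]) (auto intro!: finite_PiE Ofin ik)
  have gST: "g ` S \<subseteq> T"
  proof
    fix c assume "c \<in> g ` S"
    then obtain w where w: "w \<in> S" and c: "c = g w" by blast
    have wP: "w \<in> PiE {..n} Oc" using w unfolding S_def by blast
    have "c \<in> PiE {..k} (\<lambda>j. Oc (i j))" unfolding c g_def
      by (rule PiE_I) (use PiE_mem[OF wP] ik in auto)
    moreover have "\<forall>j\<le>k. i j \<in> C \<longrightarrow> c j = h (i j)"
      using w unfolding c g_def S_def by auto
    ultimately show "c \<in> T" unfolding T_def by blast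
  qed
  have fib: "{w. w \<in> S \<and> g w = c} = {w \<in> PiE {..n} Oc. \<forall>j\<le>k. w (i j) = c j}" if c: "c \<in> T" for c
  proof (intro equalityI subsetI)
    fix w assume "w \<in> {w. w \<in> S \<and> g w = c}"
    then have w: "w \<in> S" "g w = c" by auto
    have "\<forall>j\<le>k. w (i j) = c j"
    proof (intro allI impI)
      fix j assume "j \<le> k"
      then show "w (i j) = c j" using w(2) unfolding g_def by auto
    qed
    then show "w \<in> {w \<in> PiE {..n} Oc. \<forall>j\<le>k. w (i j) = c j}" using w(1) unfolding S_def by blast
  next
    fix w assume "w \<in> {w \<in> PiE {..n} Oc. \<forall>j\<le>k. w (i j) = c j}"
    then have w1: "w \<in> PiE {..n} Oc" and w2: "\<forall>j\<le>k. w (i j) = c j" by auto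
    have cP: "c \<in> PiE {..k} (\<lambda>j. Oc (i j))" and ch: "\<forall>j\<le>k. i j \<in> C \<longrightarrow> c j = h (i j)"
      using c unfolding T_def by auto
    have "g w = c"
    proof (rule ext)
      fix j show "g w j = c j"
      proof (cases "j \<le> k")
        case True then show ?thesis using w2 unfolding g_def by simp
      next
        case False then have "j \<notin> {..k}" by simp
        then show ?thesis using PiE_arb[OF cP] unfolding g_def by simp
      qed
    qed
    moreover have "\<forall>t\<in>C. w t = h t"
    proof
      fix t assume "t \<in> C"
      then obtain j where j: "j \<le> k" "t = i j" using C by auto
      then show "w t = h t" using w2 ch \<open>t \<in> C\<close> by simp
    qed
    ultimately show "w \<in> {w. w \<in> S \<and> g w = c}" using w1 unfolding S_def by blast
  qed
  have "(\<Sum>w\<in>S. f w) = (\<Sum>c\<in>T. \<Sum>w\<in>{w. w \<in> S \<and> g w = c}. f w)"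
    using sum.group[OF finS finT gST, of f] by simp
  also have "\<dots> = (\<Sum>c\<in>T. G c)"
  proof (rule sum.cong[OF refl])
    fix c assume c: "c \<in> T"
    then have "c \<in> PiE {..k} (\<lambda>j. Oc (i j))" unfolding T_def by blast
    then show "(\<Sum>w\<in>{w. w \<in> S \<and> g w = c}. f w) = G c" using fib[OF c] G by simp
  qed
  finally show ?thesis unfolding S_def T_def by simp
qed

lemma pair_reindex:
  fixes f :: "(nat \<Rightarrow> 'b) \<Rightarrow> (nat \<Rightarrow> 'b) \<Rightarrow> complex"
  shows "(\<Sum>(a, b)\<in>{(a, b). a \<in> PiE I A \<and> b \<in> PiE I B \<and> Q a b}. f a b)
       = (\<Sum>w\<in>{w \<in> PiE I (\<lambda>t. A t \<times> B t). Q (\<lambda>t\<in>I. fst (w t)) (\<lambda>t\<in>I. snd (w t))}.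
            f (\<lambda>t\<in>I. fst (w t)) (\<lambda>t\<in>I. snd (w t)))"
proof -
  define hh where "hh w = ((\<lambda>t\<in>I. fst (w t)), (\<lambda>t\<in>I. snd (w t)))" for w :: "nat \<Rightarrow> 'b \<times> 'b"
  have bij: "bij_betw hh {w \<in> PiE I (\<lambda>t. A t \<times> B t). Q (\<lambda>t\<in>I. fst (w t)) (\<lambda>t\<in>I. snd (w t))}
                 {(a, b). a \<in> PiE I A \<and> b \<in> PiE I B \<and> Q a b}"
  proof (rule bij_betwI')
    fix x y assume x: "x \<in> {w \<in> PiE I (\<lambda>t. A t \<times> B t). Q (\<lambda>t\<in>I. fst (w t)) (\<lambda>t\<in>I. snd (w t))}"
      and y: "y \<in> {w \<in> PiE I (\<lambda>t. A t \<times> B t). Q (\<lambda>t\<in>I. fst (w t)) (\<lambda>t\<in>I. snd (w t))}"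
    show "(hh x = hh y) = (x = y)"
    proof
      assume e: "hh x = hh y"
      show "x = y"
      proof (rule ext)
        fix t show "x t = y t"
        proof (cases "t \<in> I")
          case True
          have e1: "(\<lambda>t\<in>I. fst (x t)) = (\<lambda>t\<in>I. fst (y t))" and e2: "(\<lambda>t\<in>I. snd (x t)) = (\<lambda>t\<in>I. snd (y t))"
            using e unfolding hh_def by simp_all
          have "fst (x t) = fst (y t)" using fun_cong[OF e1, of t] True by simp
          moreover have "snd (x t) = snd (y t)" using fun_cong[OF e2, of t] True by simp
          ultimately show ?thesis by (simp add: prod_eq_iff)
        next
          case False
          have "x \<in> PiE I (\<lambda>t. A t \<times> B t)" "y \<in> PiE I (\<lambda>t. A t \<times> B t)" using x y by auto
          then show ?thesis using PiE_arb False by metis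
        qed
      qed
    qed simp
  next
    fix x assume x: "x \<in> {w \<in> PiE I (\<lambda>t. A t \<times> B t). Q (\<lambda>t\<in>I. fst (w t)) (\<lambda>t\<in>I. snd (w t))}"
    then have x1: "x \<in> PiE I (\<lambda>t. A t \<times> B t)" and x2: "Q (\<lambda>t\<in>I. fst (x t)) (\<lambda>t\<in>I. snd (x t))" by auto
    have xt: "fst (x t) \<in> A t \<and> snd (x t) \<in> B t" if "t \<in> I" for t
    proof -
      have "x t \<in> A t \<times> B t" using PiE_mem[OF x1 that] .
      then show ?thesis by (simp add: mem_Times_iff)
    qed
    have "(\<lambda>t\<in>I. fst (x t)) \<in> PiE I A"
      by (rule PiE_I) (use xt in auto)
    moreover have "(\<lambda>t\<in>I. snd (x t)) \<in> PiE I B"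
      by (rule PiE_I) (use xt in auto)
    ultimately show "hh x \<in> {(a, b). a \<in> PiE I A \<and> b \<in> PiE I B \<and> Q a b}"
      unfolding hh_def using x2 by simp
  next
    fix p assume p: "p \<in> {(a, b). a \<in> PiE I A \<and> b \<in> PiE I B \<and> Q a b}"
    obtain a b where ab: "p = (a, b)" by (cases p)
    have a: "a \<in> PiE I A" and b: "b \<in> PiE I B" and q: "Q a b" using p ab by auto
    have ea: "(\<lambda>t\<in>I. fst ((\<lambda>t\<in>I. (a t, b t)) t)) = a"
    proof (rule ext)
      fix t show "(\<lambda>t\<in>I. fst ((\<lambda>t\<in>I. (a t, b t)) t)) t = a t"
        using PiE_arb[OF a, of t] by (cases "t \<in> I") simp_all
    qed
    have eb: "(\<lambda>t\<in>I. snd ((\<lambda>t\<in>I. (a t, b t)) t)) = b"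
    proof (rule ext)
      fix t show "(\<lambda>t\<in>I. snd ((\<lambda>t\<in>I. (a t, b t)) t)) t = b t"
        using PiE_arb[OF b, of t] by (cases "t \<in> I") simp_all
    qed
    have "(\<lambda>t\<in>I. (a t, b t)) \<in> {w \<in> PiE I (\<lambda>t. A t \<times> B t). Q (\<lambda>t\<in>I. fst (w t)) (\<lambda>t\<in>I. snd (w t))}"
    proof -
      have "(\<lambda>t\<in>I. (a t, b t)) \<in> PiE I (\<lambda>t. A t \<times> B t)"
        by (rule PiE_I) (use PiE_mem[OF a] PiE_mem[OF b] in auto)
      then show ?thesis using q ea eb by simp
    qed
    moreover have "p = hh (\<lambda>t\<in>I. (a t, b t))"
      unfolding ab hh_def using ea eb by simp
    ultimately show "\<exists>x\<in>{w \<in> PiE I (\<lambda>t. A t \<times> B t). Q (\<lambda>t\<in>I. fst (w t)) (\<lambda>t\<in>I. snd (w t))}. p = hh x"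
      by blast
  qed
  have "\<And>w. (\<lambda>(a, b). f a b) (hh w) = f (\<lambda>t\<in>I. fst (w t)) (\<lambda>t\<in>I. snd (w t))"
    unfolding hh_def by (simp only: prod.case)
  then show ?thesis
    using sum.reindex_bij_betw[OF bij, of "\<lambda>(a, b). f a b"] by (simp only:)
qed




lemma general:
  fixes F :: "nat \<Rightarrow> 'o \<Rightarrow> complex mat \<Rightarrow> complex mat" and Oc :: "nat \<Rightarrow> 'o set"
  assumes rho: "\<rho> \<in> carrier_mat (d 0) (d 0)"
    and Elin: "\<And>t. 1 \<le> t \<Longrightarrow> t \<le> n \<Longrightarrow> lin_map (d (t-1)) (d t) (E t)"
    and Etr: "\<And>t. 1 \<le> t \<Longrightarrow> t \<le> n \<Longrightarrow> trace_pres (d (t-1)) (E t)"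
    and Flin: "\<And>t x. t \<le> n \<Longrightarrow> x \<in> Oc t \<Longrightarrow> lin_map (d t) (d t) (F t x)"
    and Fsum: "\<And>t X. t \<le> n \<Longrightarrow> X \<in> carrier_mat (d t) (d t) \<Longrightarrow> msum (d t) (\<lambda>x. F t x X) (Oc t) = X"
    and Ofin: "\<And>t. t \<le> n \<Longrightarrow> finite (Oc t)"
    and sub: "sub_times n k i" and sub': "sub_times n k' i'"
  shows "(\<forall>c. (\<forall>j\<le>k. c j \<in> Oc (i j)) \<longrightarrow> mtrace (gst \<rho> (sub_channels E i) (\<lambda>j. F (i j)) c k) =
    (\<Sum>w \<in> {w \<in> PiE {..n} Oc. \<forall>j\<le>k. w (i j) = c j}. mtrace (gst \<rho> E F w n)))
   \<and> (\<forall>h. (\<Sum>c\<in>{c \<in> PiE {..k} (\<lambda>j. Oc (i j)). \<forall>j\<le>k. i j \<in> i ` {..k} \<inter> i' ` {..k'} \<longrightarrow> c j = h (i j)}.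
            mtrace (gst \<rho> (sub_channels E i) (\<lambda>j. F (i j)) c k))
        = (\<Sum>c\<in>{c \<in> PiE {..k'} (\<lambda>j. Oc (i' j)). \<forall>j\<le>k'. i' j \<in> i ` {..k} \<inter> i' ` {..k'} \<longrightarrow> c j = h (i' j)}.
            mtrace (gst \<rho> (sub_channels E i') (\<lambda>j. F (i' j)) c k')))"
proof -
  note m1 = marg[OF rho Elin Etr Flin Fsum Ofin sub]
  note m2 = marg[OF rho Elin Etr Flin Fsum Ofin sub']
  have ik: "\<And>j. j \<le> k \<Longrightarrow> i j \<le> n" using i_le_n[OF rho Elin Etr Flin Fsum Ofin sub] by blast
  have ik': "\<And>j. j \<le> k' \<Longrightarrow> i' j \<le> n" using i_le_n[OF rho Elin Etr Flin Fsum Ofin sub'] by blast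
  have part1: "\<forall>c. (\<forall>j\<le>k. c j \<in> Oc (i j)) \<longrightarrow> mtrace (gst \<rho> (sub_channels E i) (\<lambda>j. F (i j)) c k) =
    (\<Sum>w \<in> {w \<in> PiE {..n} Oc. \<forall>j\<le>k. w (i j) = c j}. mtrace (gst \<rho> E F w n))"
    using m1 by blast
  have part2: "(\<Sum>c\<in>{c \<in> PiE {..k} (\<lambda>j. Oc (i j)). \<forall>j\<le>k. i j \<in> i ` {..k} \<inter> i' ` {..k'} \<longrightarrow> c j = h (i j)}.
            mtrace (gst \<rho> (sub_channels E i) (\<lambda>j. F (i j)) c k))
        = (\<Sum>c\<in>{c \<in> PiE {..k'} (\<lambda>j. Oc (i' j)). \<forall>j\<le>k'. i' j \<in> i ` {..k} \<inter> i' ` {..k'} \<longrightarrow> c j = h (i' j)}.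
            mtrace (gst \<rho> (sub_channels E i') (\<lambda>j. F (i' j)) c k'))" for h
  proof -
    let ?C = "i ` {..k} \<inter> i' ` {..k'}"
    have "(\<Sum>c\<in>{c \<in> PiE {..k} (\<lambda>j. Oc (i j)). \<forall>j\<le>k. i j \<in> ?C \<longrightarrow> c j = h (i j)}.
            mtrace (gst \<rho> (sub_channels E i) (\<lambda>j. F (i j)) c k))
        = (\<Sum>w\<in>{w \<in> PiE {..n} Oc. \<forall>t\<in>?C. w t = h t}. mtrace (gst \<rho> E F w n))"
      apply (rule regroup[where Oc=Oc and n=n])
         apply (simp add: Ofin)
        apply (simp add: ik)
       apply blast
      apply (rule m1)
      apply (auto simp: PiE_iff)
      done
    moreover have "(\<Sum>c\<in>{c \<in> PiE {..k'} (\<lambda>j. Oc (i' j)). \<forall>j\<le>k'. i' j \<in> ?C \<longrightarrow> c j = h (i' j)}.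
            mtrace (gst \<rho> (sub_channels E i') (\<lambda>j. F (i' j)) c k'))
        = (\<Sum>w\<in>{w \<in> PiE {..n} Oc. \<forall>t\<in>?C. w t = h t}. mtrace (gst \<rho> E F w n))"
      apply (rule regroup[where Oc=Oc and n=n])
         apply (simp add: Ofin)
        apply (simp add: ik')
       apply blast
      apply (rule m2)
      apply (auto simp: PiE_iff)
      done
    ultimately show ?thesis by simp
  qed
  show ?thesis using part1 part2 by blast
qed

lemma rstate_gst: "rstate \<rho> E P b m = gst \<rho> E (\<lambda>t x X. X * P t x) b m"
  by (induction m) simp_all

lemma lstate_gst: "lstate \<rho> E P b m = gst \<rho> E (\<lambda>t x X. P t x * X) b m"
  by (induction m) simp_all

lemma dstate_gst: "dstate \<rho> E PA PB a b m = gst \<rho> E (\<lambda>t (x, y) X. PA t x * X * PB t y) (\<lambda>t. (a t, b t)) m"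
  by (induction m) simp_all

lemma dKD_w: "doubled_KD m \<rho> E PA PB (\<lambda>t\<in>{..m}. fst (w t)) (\<lambda>t\<in>{..m}. snd (w t))
   = mtrace (gst \<rho> E (\<lambda>t (x, y) X. PA t x * X * PB t y) w m)"
  unfolding doubled_KD_def dstate_gst by (rule arg_cong[where f=mtrace], rule gst_cong) simp




theorem lemma1:
  fixes n k k' :: nat and d i i' :: "nat \<Rightarrow> nat" and \<rho> :: "complex mat"
    and E :: "nat \<Rightarrow> complex mat \<Rightarrow> complex mat"
    and A B :: "nat \<Rightarrow> 'b set" and PA PB :: "nat \<Rightarrow> 'b \<Rightarrow> complex mat"
  assumes proc: "quantum_process n d \<rho> E"
    and measA: "measurements n d A PA"
    and measB: "measurements n d B PB"
    and sub: "sub_times n k i"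
    and sub': "sub_times n k' i'"
    and inter: "i ` {..k} \<inter> i' ` {..k'} \<noteq> {}"
  shows
    \<comment> \<open>right KD of the sub-process = marginal of the right KD of the process\<close>
    "(\<forall>c. (\<forall>j\<le>k. c j \<in> B (i j)) \<longrightarrow>
        right_KD k \<rho> (sub_channels E i) (\<lambda>j. PB (i j)) c =
        (\<Sum>b \<in> {b \<in> PiE {..n} B. \<forall>j\<le>k. b (i j) = c j}. right_KD n \<rho> E PB b))
   \<and> \<comment> \<open>left KD\<close>
     (\<forall>c. (\<forall>j\<le>k. c j \<in> A (i j)) \<longrightarrow>
        left_KD k \<rho> (sub_channels E i) (\<lambda>j. PA (i j)) c =
        (\<Sum>a \<in> {a \<in> PiE {..n} A. \<forall>j\<le>k. a (i j) = c j}. left_KD n \<rho> E PA a))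
   \<and> \<comment> \<open>doubled KD\<close>
     (\<forall>c c'. (\<forall>j\<le>k. c j \<in> A (i j) \<and> c' j \<in> B (i j)) \<longrightarrow>
        doubled_KD k \<rho> (sub_channels E i) (\<lambda>j. PA (i j)) (\<lambda>j. PB (i j)) c c' =
        (\<Sum>(a, b) \<in> {(a, b). a \<in> PiE {..n} A \<and> b \<in> PiE {..n} B \<and>
                            (\<forall>j\<le>k. a (i j) = c j \<and> b (i j) = c' j)}.
           doubled_KD n \<rho> E PA PB a b))
   \<and> \<comment> \<open>consistency of marginals onto the common times (right)\<close>
     (\<forall>h. (\<Sum>c \<in> {c \<in> PiE {..k} (\<lambda>j. B (i j)).
                    \<forall>j\<le>k. i j \<in> i ` {..k} \<inter> i' ` {..k'} \<longrightarrow> c j = h (i j)}.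
            right_KD k \<rho> (sub_channels E i) (\<lambda>j. PB (i j)) c) =
          (\<Sum>c \<in> {c \<in> PiE {..k'} (\<lambda>j. B (i' j)).
                    \<forall>j\<le>k'. i' j \<in> i ` {..k} \<inter> i' ` {..k'} \<longrightarrow> c j = h (i' j)}.
            right_KD k' \<rho> (sub_channels E i') (\<lambda>j. PB (i' j)) c))
   \<and> \<comment> \<open>consistency (left)\<close>
     (\<forall>h. (\<Sum>c \<in> {c \<in> PiE {..k} (\<lambda>j. A (i j)).
                    \<forall>j\<le>k. i j \<in> i ` {..k} \<inter> i' ` {..k'} \<longrightarrow> c j = h (i j)}.
            left_KD k \<rho> (sub_channels E i) (\<lambda>j. PA (i j)) c) =
          (\<Sum>c \<in> {c \<in> PiE {..k'} (\<lambda>j. A (i' j)).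
                    \<forall>j\<le>k'. i' j \<in> i ` {..k} \<inter> i' ` {..k'} \<longrightarrow> c j = h (i' j)}.
            left_KD k' \<rho> (sub_channels E i') (\<lambda>j. PA (i' j)) c))
   \<and> \<comment> \<open>consistency (doubled)\<close>
     (\<forall>h h'. (\<Sum>(c, c') \<in> {(c, c'). c \<in> PiE {..k} (\<lambda>j. A (i j)) \<and> c' \<in> PiE {..k} (\<lambda>j. B (i j)) \<and>
                    (\<forall>j\<le>k. i j \<in> i ` {..k} \<inter> i' ` {..k'} \<longrightarrow> c j = h (i j) \<and> c' j = h' (i j))}.
            doubled_KD k \<rho> (sub_channels E i) (\<lambda>j. PA (i j)) (\<lambda>j. PB (i j)) c c') =
          (\<Sum>(c, c') \<in> {(c, c'). c \<in> PiE {..k'} (\<lambda>j. A (i' j)) \<and> c' \<in> PiE {..k'} (\<lambda>j. B (i' j)) \<and>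
                    (\<forall>j\<le>k'. i' j \<in> i ` {..k} \<inter> i' ` {..k'} \<longrightarrow> c j = h (i' j) \<and> c' j = h' (i' j))}.
            doubled_KD k' \<rho> (sub_channels E i') (\<lambda>j. PA (i' j)) (\<lambda>j. PB (i' j)) c c'))"
proof -
  have rho: "\<rho> \<in> carrier_mat (d 0) (d 0)"
    using proc unfolding quantum_process_def density_op_def psd_def by blast
  have Elin: "\<And>t. 1 \<le> t \<Longrightarrow> t \<le> n \<Longrightarrow> lin_map (d (t-1)) (d t) (E t)"
    using proc unfolding quantum_process_def cptp_def by auto
  have Etr: "\<And>t. 1 \<le> t \<Longrightarrow> t \<le> n \<Longrightarrow> trace_pres (d (t-1)) (E t)"
    using proc unfolding quantum_process_def cptp_def by auto
  have pfA: "\<And>t. t \<le> n \<Longrightarrow> proj_family (d t) (A t) (PA t)" using measA unfolding measurements_def by blast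
  have pfB: "\<And>t. t \<le> n \<Longrightarrow> proj_family (d t) (B t) (PB t)" using measB unfolding measurements_def by blast
  have PAc: "\<And>t x. t \<le> n \<Longrightarrow> x \<in> A t \<Longrightarrow> PA t x \<in> carrier_mat (d t) (d t)"
    using pfA unfolding proj_family_def by blast
  have PBc: "\<And>t x. t \<le> n \<Longrightarrow> x \<in> B t \<Longrightarrow> PB t x \<in> carrier_mat (d t) (d t)"
    using pfB unfolding proj_family_def by blast
  have PAs: "\<And>t. t \<le> n \<Longrightarrow> msum (d t) (PA t) (A t) = 1\<^sub>m (d t)"
    using pfA unfolding proj_family_def by blast
  have PBs: "\<And>t. t \<le> n \<Longrightarrow> msum (d t) (PB t) (B t) = 1\<^sub>m (d t)"
    using pfB unfolding proj_family_def by blast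
  have finA: "\<And>t. t \<le> n \<Longrightarrow> finite (A t)" using pfA unfolding proj_family_def by blast
  have finB: "\<And>t. t \<le> n \<Longrightarrow> finite (B t)" using pfB unfolding proj_family_def by blast
  have finAB: "\<And>t. t \<le> n \<Longrightarrow> finite (A t \<times> B t)" using finA finB by blast
  have sumR: "msum (d t) (\<lambda>x. X * PB t x) (B t) = X" if t: "t \<le> n" and X: "X \<in> carrier_mat (d t) (d t)" for t X
  proof -
    have "msum (d t) (\<lambda>x. X * PB t x) (B t) = X * msum (d t) (PB t) (B t)"
      using lin_msum[OF lin_left[OF X] finB[OF t], of "PB t"] PBc[OF t] by simp
    also have "\<dots> = X" using PBs[OF t] X by simp
    finally show ?thesis .
  qed
  have sumL: "msum (d t) (\<lambda>x. PA t x * X) (A t) = X" if t: "t \<le> n" and X: "X \<in> carrier_mat (d t) (d t)" for t X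
  proof -
    have "msum (d t) (\<lambda>x. PA t x * X) (A t) = msum (d t) (PA t) (A t) * X"
      using lin_msum[OF lin_right[OF X] finA[OF t], of "PA t"] PAc[OF t] by simp
    also have "\<dots> = X" using PAs[OF t] X by simp
    finally show ?thesis .
  qed
  have sumD: "msum (d t) (\<lambda>p. (\<lambda>(x, y) X. PA t x * X * PB t y) p X) (A t \<times> B t) = X"
    if t: "t \<le> n" and X: "X \<in> carrier_mat (d t) (d t)" for t X
  proof -
    have "msum (d t) (\<lambda>p. (\<lambda>(x, y) X. PA t x * X * PB t y) p X) (A t \<times> B t)
        = msum (d t) (\<lambda>a. msum (d t) (\<lambda>b. PA t a * X * PB t b) (B t)) (A t)"
      by (simp add: msum_Times[OF finA[OF t] finB[OF t]])
    also have "\<dots> = msum (d t) (\<lambda>a. PA t a * X) (A t)"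
      by (rule msum_cong[OF _ refl], rule sumR[OF t]) (use PAc[OF t] X in \<open>auto intro: mult_carrier_mat\<close>)
    also have "\<dots> = X" by (rule sumL[OF t X])
    finally show ?thesis .
  qed
  have linR: "\<And>t x. t \<le> n \<Longrightarrow> x \<in> B t \<Longrightarrow> lin_map (d t) (d t) (\<lambda>X. X * PB t x)"
    using PBc lin_right by blast
  have linL: "\<And>t x. t \<le> n \<Longrightarrow> x \<in> A t \<Longrightarrow> lin_map (d t) (d t) (\<lambda>X. PA t x * X)"
    using PAc lin_left by blast
  have linD: "lin_map (d t) (d t) ((\<lambda>(x, y) X. PA t x * X * PB t y) p)" if "t \<le> n" "p \<in> A t \<times> B t" for t p
  proof -
    obtain x y where p: "p = (x, y)" by (cases p)
    show ?thesis unfolding p using lin_both[OF PAc PBc] that p by auto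
  qed
  note GR = general[where F="\<lambda>t x X. X * PB t x" and Oc=B, OF rho Elin Etr linR sumR finB sub sub']
  note GL = general[where F="\<lambda>t x X. PA t x * X" and Oc=A, OF rho Elin Etr linL sumL finA sub sub']
  note GD = general[where F="\<lambda>t (x, y) X. PA t x * X * PB t y" and Oc="\<lambda>t. A t \<times> B t", OF rho Elin Etr linD sumD finAB sub sub']
  have ik: "\<And>j. j \<le> k \<Longrightarrow> i j \<le> n" using i_le_n[OF rho Elin Etr linR sumR finB sub] by blast
  have R1: "\<forall>c. (\<forall>j\<le>k. c j \<in> B (i j)) \<longrightarrow>
        right_KD k \<rho> (sub_channels E i) (\<lambda>j. PB (i j)) c =
        (\<Sum>b \<in> {b \<in> PiE {..n} B. \<forall>j\<le>k. b (i j) = c j}. right_KD n \<rho> E PB b)"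
    unfolding right_KD_def rstate_gst using conjunct1[OF GR] by simp
  have L1: "\<forall>c. (\<forall>j\<le>k. c j \<in> A (i j)) \<longrightarrow>
        left_KD k \<rho> (sub_channels E i) (\<lambda>j. PA (i j)) c =
        (\<Sum>a \<in> {a \<in> PiE {..n} A. \<forall>j\<le>k. a (i j) = c j}. left_KD n \<rho> E PA a)"
    unfolding left_KD_def lstate_gst using conjunct1[OF GL] by simp
  have R2: "\<forall>h. (\<Sum>c \<in> {c \<in> PiE {..k} (\<lambda>j. B (i j)).
                    \<forall>j\<le>k. i j \<in> i ` {..k} \<inter> i' ` {..k'} \<longrightarrow> c j = h (i j)}.
            right_KD k \<rho> (sub_channels E i) (\<lambda>j. PB (i j)) c) =
          (\<Sum>c \<in> {c \<in> PiE {..k'} (\<lambda>j. B (i' j)).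
                    \<forall>j\<le>k'. i' j \<in> i ` {..k} \<inter> i' ` {..k'} \<longrightarrow> c j = h (i' j)}.
            right_KD k' \<rho> (sub_channels E i') (\<lambda>j. PB (i' j)) c)"
    unfolding right_KD_def rstate_gst using conjunct2[OF GR] by simp
  have L2: "\<forall>h. (\<Sum>c \<in> {c \<in> PiE {..k} (\<lambda>j. A (i j)).
                    \<forall>j\<le>k. i j \<in> i ` {..k} \<inter> i' ` {..k'} \<longrightarrow> c j = h (i j)}.
            left_KD k \<rho> (sub_channels E i) (\<lambda>j. PA (i j)) c) =
          (\<Sum>c \<in> {c \<in> PiE {..k'} (\<lambda>j. A (i' j)).
                    \<forall>j\<le>k'. i' j \<in> i ` {..k} \<inter> i' ` {..k'} \<longrightarrow> c j = h (i' j)}.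
            left_KD k' \<rho> (sub_channels E i') (\<lambda>j. PA (i' j)) c)"
    unfolding left_KD_def lstate_gst using conjunct2[OF GL] by simp
  have D1: "\<forall>c c'. (\<forall>j\<le>k. c j \<in> A (i j) \<and> c' j \<in> B (i j)) \<longrightarrow>
        doubled_KD k \<rho> (sub_channels E i) (\<lambda>j. PA (i j)) (\<lambda>j. PB (i j)) c c' =
        (\<Sum>(a, b) \<in> {(a, b). a \<in> PiE {..n} A \<and> b \<in> PiE {..n} B \<and>
                            (\<forall>j\<le>k. a (i j) = c j \<and> b (i j) = c' j)}.
           doubled_KD n \<rho> E PA PB a b)"
  proof (intro allI impI)
    fix c c' assume cc: "\<forall>j\<le>k. c j \<in> A (i j) \<and> c' j \<in> B (i j)"
    have "doubled_KD k \<rho> (sub_channels E i) (\<lambda>j. PA (i j)) (\<lambda>j. PB (i j)) c c'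
        = mtrace (gst \<rho> (sub_channels E i) (\<lambda>j. (\<lambda>t (x, y) X. PA t x * X * PB t y) (i j)) (\<lambda>t. (c t, c' t)) k)"
      unfolding doubled_KD_def dstate_gst by simp
    also have "\<dots> = (\<Sum>w \<in> {w \<in> PiE {..n} (\<lambda>t. A t \<times> B t). \<forall>j\<le>k. w (i j) = (c j, c' j)}.
         mtrace (gst \<rho> E (\<lambda>t (x, y) X. PA t x * X * PB t y) w n))"
      using conjunct1[OF GD] cc by simp
    also have "\<dots> = (\<Sum>w \<in> {w \<in> PiE {..n} (\<lambda>t. A t \<times> B t).
            (\<lambda>a b. \<forall>j\<le>k. a (i j) = c j \<and> b (i j) = c' j) (\<lambda>t\<in>{..n}. fst (w t)) (\<lambda>t\<in>{..n}. snd (w t))}.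
         doubled_KD n \<rho> E PA PB (\<lambda>t\<in>{..n}. fst (w t)) (\<lambda>t\<in>{..n}. snd (w t)))"
    proof (rule sum.cong)
      show "{w \<in> PiE {..n} (\<lambda>t. A t \<times> B t). \<forall>j\<le>k. w (i j) = (c j, c' j)} =
        {w \<in> PiE {..n} (\<lambda>t. A t \<times> B t).
            (\<lambda>a b. \<forall>j\<le>k. a (i j) = c j \<and> b (i j) = c' j) (\<lambda>t\<in>{..n}. fst (w t)) (\<lambda>t\<in>{..n}. snd (w t))}"
        using ik by (auto simp: prod_eq_iff)
    qed (simp add: dKD_w)
    also have "\<dots> = (\<Sum>(a, b) \<in> {(a, b). a \<in> PiE {..n} A \<and> b \<in> PiE {..n} B \<and>
                            (\<forall>j\<le>k. a (i j) = c j \<and> b (i j) = c' j)}.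
           doubled_KD n \<rho> E PA PB a b)"
      by (rule pair_reindex[symmetric])
    finally show "doubled_KD k \<rho> (sub_channels E i) (\<lambda>j. PA (i j)) (\<lambda>j. PB (i j)) c c' =
        (\<Sum>(a, b) \<in> {(a, b). a \<in> PiE {..n} A \<and> b \<in> PiE {..n} B \<and>
                            (\<forall>j\<le>k. a (i j) = c j \<and> b (i j) = c' j)}.
           doubled_KD n \<rho> E PA PB a b)" .
  qed
  have conv: "(\<Sum>(c, c') \<in> {(c, c'). c \<in> PiE {..kk} (\<lambda>j. A (ii j)) \<and> c' \<in> PiE {..kk} (\<lambda>j. B (ii j)) \<and>
                    (\<forall>j\<le>kk. ii j \<in> C \<longrightarrow> c j = h (ii j) \<and> c' j = h' (ii j))}.
            doubled_KD kk \<rho> (sub_channels E ii) (\<lambda>j. PA (ii j)) (\<lambda>j. PB (ii j)) c c')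
     = (\<Sum>w \<in> {w \<in> PiE {..kk} (\<lambda>j. A (ii j) \<times> B (ii j)). \<forall>j\<le>kk. ii j \<in> C \<longrightarrow> w j = (h (ii j), h' (ii j))}.
            mtrace (gst \<rho> (sub_channels E ii) (\<lambda>j. (\<lambda>t (x, y) X. PA t x * X * PB t y) (ii j)) w kk))"
    for kk ii C h h'
  proof -
    have "(\<Sum>(c, c') \<in> {(c, c'). c \<in> PiE {..kk} (\<lambda>j. A (ii j)) \<and> c' \<in> PiE {..kk} (\<lambda>j. B (ii j)) \<and>
                    (\<forall>j\<le>kk. ii j \<in> C \<longrightarrow> c j = h (ii j) \<and> c' j = h' (ii j))}.
            doubled_KD kk \<rho> (sub_channels E ii) (\<lambda>j. PA (ii j)) (\<lambda>j. PB (ii j)) c c')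
      = (\<Sum>w \<in> {w \<in> PiE {..kk} (\<lambda>j. A (ii j) \<times> B (ii j)).
            (\<lambda>c c'. \<forall>j\<le>kk. ii j \<in> C \<longrightarrow> c j = h (ii j) \<and> c' j = h' (ii j)) (\<lambda>t\<in>{..kk}. fst (w t)) (\<lambda>t\<in>{..kk}. snd (w t))}.
         doubled_KD kk \<rho> (sub_channels E ii) (\<lambda>j. PA (ii j)) (\<lambda>j. PB (ii j)) (\<lambda>t\<in>{..kk}. fst (w t)) (\<lambda>t\<in>{..kk}. snd (w t)))"
      by (rule pair_reindex)
    also have "\<dots> = (\<Sum>w \<in> {w \<in> PiE {..kk} (\<lambda>j. A (ii j) \<times> B (ii j)). \<forall>j\<le>kk. ii j \<in> C \<longrightarrow> w j = (h (ii j), h' (ii j))}.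
            mtrace (gst \<rho> (sub_channels E ii) (\<lambda>j. (\<lambda>t (x, y) X. PA t x * X * PB t y) (ii j)) w kk))"
    proof (rule sum.cong)
      show "{w \<in> PiE {..kk} (\<lambda>j. A (ii j) \<times> B (ii j)).
            (\<lambda>c c'. \<forall>j\<le>kk. ii j \<in> C \<longrightarrow> c j = h (ii j) \<and> c' j = h' (ii j)) (\<lambda>t\<in>{..kk}. fst (w t)) (\<lambda>t\<in>{..kk}. snd (w t))}
          = {w \<in> PiE {..kk} (\<lambda>j. A (ii j) \<times> B (ii j)). \<forall>j\<le>kk. ii j \<in> C \<longrightarrow> w j = (h (ii j), h' (ii j))}"
        by (auto simp: prod_eq_iff)
    qed (simp add: dKD_w)
    finally show ?thesis .
  qed
  have D2: "\<forall>h h'. (\<Sum>(c, c') \<in> {(c, c'). c \<in> PiE {..k} (\<lambda>j. A (i j)) \<and> c' \<in> PiE {..k} (\<lambda>j. B (i j)) \<and>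
                    (\<forall>j\<le>k. i j \<in> i ` {..k} \<inter> i' ` {..k'} \<longrightarrow> c j = h (i j) \<and> c' j = h' (i j))}.
            doubled_KD k \<rho> (sub_channels E i) (\<lambda>j. PA (i j)) (\<lambda>j. PB (i j)) c c') =
          (\<Sum>(c, c') \<in> {(c, c'). c \<in> PiE {..k'} (\<lambda>j. A (i' j)) \<and> c' \<in> PiE {..k'} (\<lambda>j. B (i' j)) \<and>
                    (\<forall>j\<le>k'. i' j \<in> i ` {..k} \<inter> i' ` {..k'} \<longrightarrow> c j = h (i' j) \<and> c' j = h' (i' j))}.
            doubled_KD k' \<rho> (sub_channels E i') (\<lambda>j. PA (i' j)) (\<lambda>j. PB (i' j)) c c')"
  proof (intro allI)
    fix h h'
    show "(\<Sum>(c, c') \<in> {(c, c'). c \<in> PiE {..k} (\<lambda>j. A (i j)) \<and> c' \<in> PiE {..k} (\<lambda>j. B (i j)) \<and>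
                    (\<forall>j\<le>k. i j \<in> i ` {..k} \<inter> i' ` {..k'} \<longrightarrow> c j = h (i j) \<and> c' j = h' (i j))}.
            doubled_KD k \<rho> (sub_channels E i) (\<lambda>j. PA (i j)) (\<lambda>j. PB (i j)) c c') =
          (\<Sum>(c, c') \<in> {(c, c'). c \<in> PiE {..k'} (\<lambda>j. A (i' j)) \<and> c' \<in> PiE {..k'} (\<lambda>j. B (i' j)) \<and>
                    (\<forall>j\<le>k'. i' j \<in> i ` {..k} \<inter> i' ` {..k'} \<longrightarrow> c j = h (i' j) \<and> c' j = h' (i' j))}.
            doubled_KD k' \<rho> (sub_channels E i') (\<lambda>j. PA (i' j)) (\<lambda>j. PB (i' j)) c c')"
      unfolding conv using conjunct2[OF GD, rule_format, of "\<lambda>t. (h t, h' t)"] by simp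
  qed
  show ?thesis using R1 L1 D1 R2 L2 D2 by blast
qed


end
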